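(* Let $H=\big(\frac{S_k}{z^k}+\cdots+\frac{S_1}{z}+S_0+N_0\big)\frac{dz}{z}$ be an unramified HTL normal form of rank $n$ with spectral type $(\mathbf{m}_0\le_{\phi_0}\mathbf{m}_1\le_{\phi_1}\cdots\le_{\phi_{k-1}}\mathbf{m}_k,\ \sigma(\mathbf{m}_0))$. Let $\mathcal{I}\colon I_0,I_1,\dots,I_r$ be a partition of $\{0,1,\dots,k\}$ with $0\in I_0$, write $I_j=\{i_{[j,0]}<i_{[j,1]}<\cdots<i_{[j,k_j]}\}$, and let $\mathsf{c}=(c_0,\dots,c_r)\in\mathbb{C}^{r+1}$ have pairwise distinct entries and satisfy $\iota_{\mathcal{I}}(\mathsf{c})\in\mathbb{D}(H)$. Write the partial fraction decomposition $H(\iota_{\mathcal{I}}(\mathsf{c}))=\sum_{j=0}^r H_{\mathcal{I}}(\mathsf{c})_{z_{c_j}}$ with $H_{\mathcal{I}}(\mathsf{c})_{z_{c_j}}=\sum_{\nu=0}^{k_j}\frac{A^{[j]}_\nu}{z_{c_j}^{\nu+1}}dz_{c_j}$, $z_{c_j}=z-c_j$, $A^{[j]}_\nu\in M_n(\mathbb{C})$. Then each $H_{\mathcal{I}}(\mathsf{c})_{z_{c_j}}$ is an unramified HTL normal form, with spectral type \[(\mathbf{m}_{i_{[j,0]}}\le_{\phi_{i_{[j,0]}}^{i_{[j,1]}}}\mathbf{m}_{i_{[j,1]}}\le\cdots\le_{\phi^{i_{[j,k_j]}}_{i_{[j,k_j-1]}}}\mathbf{m}_{i_{[j,k_j]}},\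 \mathrm{triv})\quad (j=1,\dots,r),\] and \[(\mathbf{m}_{i_{[0,0]}}\le_{\phi_{i_{[0,0]}}^{i_{[0,1]}}}\mathbf{m}_{i_{[0,1]}}\le\cdots\le_{\phi^{i_{[0,k_0]}}_{i_{[0,k_0-1]}}}\mathbf{m}_{i_{[0,k_0]}},\ \sigma(\mathbf{m}_0))\quad (j=0).\]
   Context: An unramified HTL normal form is $H=\big(\sum_{i=1}^k S_iz^{-i}+S_0+N_0\big)\frac{dz}{z}$ with $S_i\in M_n(\mathbb{C})$ diagonal and $N_0$ nilpotent commuting with all $S_i$. Spectral type: for $i=0,\dots,k$ let $\mathbb{C}^n=\bigoplus_{j=1}^{m(i)}V_{\langle i,j\rangle}$ be the decomposition into simultaneous eigenspaces of $(S_i,S_{i+1},\dots,S_k)$ and $\mathbf{m}_i=(\dim V_{\langle i,1\rangle},\dots,\dim V_{\langle i,m(i)\rangle})$; $\phi_i\colon\{1,\dots,m(i)\}\to\{1,\dots,m(i+1)\}$ is the map with $V_{\langle i+1,j\rangle}=\bigoplus_{\mu\in\phi_i^{-1}(j)}V_{\langle i,\mu\rangle}$, and for $i<i'$, $\phi_i^{i'}=\phi_{i'-1}\circ\cdots\circ\phi_i$ (the refinement map from $\mathbf{m}_i$ to $\mathbf{m}_{i'}$). The signature $\sigma(\mathbf{m}_0)$ is the family, over $j=1,\dots,m(0)$, of sequences $(\dim V_{\langle0,j\rangle},\dim\mathrm{Im}N_j,\dim\mathrm{Im}N_j^2,\dots,\dim\mathrm{Im}N_j^{d_j-1})$ where $N_j=N_0|_{V_{\langle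 0,j\rangle}}$ and $N_j^{d_j}=0\neq N_j^{d_j-1}$; "triv" means the signature of a nilpotent part $0$. The spectral type is $(\mathbf{m}_0\le_{\phi_0}\cdots\le_{\phi_{k-1}}\mathbf{m}_k,\sigma(\mathbf{m}_0))$. Unfolding: for $\mathbf{c}=(c_0,\dots,c_k)\in\mathbb{C}^{k+1}$, $H(\mathbf{c})=\big(\frac{S_k}{(z-c_1)\cdots(z-c_k)}+\cdots+\frac{S_1}{z-c_1}+S_0+N_0\big)\frac{dz}{z-c_0}$. The set $\mathbb{D}(H)$: let $s^{(l)}_{\langle i,j\rangle}$ be the eigenvalue of $S_l$ on $V_{\langle i,j\rangle}$ ($i\le l\le k$); for $j\neq j'$ let $t=t_i(j,j')$ be the largest $l\in\{i,\dots,k\}$ with $s^{(l)}_{\langle i,j\rangle}\ne s^{(l)}_{\langle i,j'\rangle}$, and put $\alpha^*_{i;j,j'}(x_0,\dots,x_k)=\sum_{l=i}^{t}(s^{(l)}_{\langle i,j\rangle}-s^{(l)}_{\langle i,j'\rangle})\prod_{l<\nu\le t}(x_i-x_\nu)$. Then $\mathbb{D}(H)=\mathbb{C}^{k+1}\setminus\bigcup_{i=0}^{k-1}\bigcup_{1\le j<j'\le m(i)}\{\alpha^*_{i;j,j'}=0\}$. For the partition $\mathcal{I}$, $\iota_{\mathcal{I}}\colon\mathbb{C}^{r+1}\to\mathbb{C}^{k+1}$ sends $(a_0,\dots,a_r)$ to the vector whose $i$-th entry is $a_l$ for $i\in I_l$. *)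

theory Defs
  imports "HOL-Analysis.Analysis"
begin

type_synonym 'n cmat = "complex^'n^'n"

text \<open>An unramified HTL normal form of rank n = CARD('n), pole order k:
  data (k, S_0..S_k, N_0), standing for (sum_i S_i z^-i + S_0 + N_0) dz/z.\<close>

definition is_diag :: "'n::finite cmat \<Rightarrow> bool" where
  "is_diag A \<longleftrightarrow> (\<forall>i j. i \<noteq> j \<longrightarrow> A $ i $ j = 0)"

definition mat_nilpotent :: "'n::finite cmat \<Rightarrow> bool" where
  "mat_nilpotent N \<longleftrightarrow> (\<exists>p. ((\<lambda>B. N ** B) ^^ p) (mat 1) = 0)"

definition htl_nf :: "nat \<Rightarrow> (nat \<Rightarrow> 'n::finite cmat) \<Rightarrow> 'n cmat \<Rightarrow> bool" where
  "htl_nf k S N \<longleftrightarrow> (\<forall>i\<le>k. is_diag (S i)) \<and> mat_nilpotent N \<and>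
     (\<forall>i\<le>k. S i ** N = N ** S i)"

definition joint_eigsp :: "nat \<Rightarrow> (nat \<Rightarrow> 'n::finite cmat) \<Rightarrow> nat \<Rightarrow> (nat \<Rightarrow> complex) \<Rightarrow> (complex^'n) set" where
  "joint_eigsp k S i lam = {v. \<forall>l\<in>{i..k}. S l *v v = lam l *s v}"

definition joint_eigspaces :: "nat \<Rightarrow> (nat \<Rightarrow> 'n::finite cmat) \<Rightarrow> nat \<Rightarrow> (complex^'n) set set" where
  "joint_eigspaces k S i = {E. \<exists>lam. E = joint_eigsp k S i lam \<and> E \<noteq> {0}}"

definition nil_index :: "'n::finite cmat \<Rightarrow> (complex^'n) set \<Rightarrow> nat" where
  "nil_index N V = (LEAST d. \<forall>v\<in>V. (((*v) N) ^^ d) v = 0)"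

definition signature_seq :: "'n::finite cmat \<Rightarrow> (complex^'n) set \<Rightarrow> nat list" where
  "signature_seq N V = map (\<lambda>p. vec.dim ((\<lambda>v. (((*v) N) ^^ p) v) ` V)) [0..<nil_index N V]"

text \<open>Spectral type (m, phi, sig), with 0-based indices: level i has the eigenspaces
  V i 0, ..., V i (length (m i) - 1) (an enumeration of the simultaneous eigenspaces of
  (S_i,...,S_k)), m i ! j = dim V i j, phi i : level i \<rightarrow> level i+1 with
  V (i+1) j = direct sum of V i mu over phi i mu = j, and sig j the signature of N on V 0 j.\<close>
definition has_spectral_type ::
  "nat \<Rightarrow> (nat \<Rightarrow> 'n::finite cmat) \<Rightarrow> 'n cmat \<Rightarrow>
   (nat \<Rightarrow> nat list) \<Rightarrow> (nat \<Rightarrow> nat \<Rightarrow> nat) \<Rightarrow> (nat \<Rightarrow> nat list) \<Rightarrow> bool" where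
  "has_spectral_type k S N m phi sig \<longleftrightarrow>
    (\<exists>V :: nat \<Rightarrow> nat \<Rightarrow> (complex^'n) set.
      (\<forall>i\<le>k. bij_betw (V i) {..<length (m i)} (joint_eigspaces k S i) \<and>
              (\<forall>j<length (m i). m i ! j = vec.dim (V i j))) \<and>
      (\<forall>i<k. (\<forall>mu<length (m i). phi i mu < length (m (Suc i))) \<and>
             (\<forall>j<length (m (Suc i)).
                V (Suc i) j = vec.span (\<Union>mu\<in>{mu. mu < length (m i) \<and> phi i mu = j}. V i mu))) \<and>
      (\<forall>j<length (m 0). sig j = signature_seq N (V 0 j)))"

text \<open>Composed refinement maps: phi_comp phi i d = phi_{i}^{i+d}.\<close>
fun phi_comp :: "(nat \<Rightarrow> nat \<Rightarrow> nat) \<Rightarrow> nat \<Rightarrow> nat \<Rightarrow> nat \<Rightarrow> nat" where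
  "phi_comp phi i 0 = id"
| "phi_comp phi i (Suc d) = phi (i + d) \<circ> phi_comp phi i d"

definition is_joint_eigval :: "nat \<Rightarrow> (nat \<Rightarrow> 'n::finite cmat) \<Rightarrow> nat \<Rightarrow> (nat \<Rightarrow> complex) \<Rightarrow> bool" where
  "is_joint_eigval k S i lam \<longleftrightarrow> joint_eigsp k S i lam \<noteq> {0}"

definition alpha_star :: "nat \<Rightarrow> nat \<Rightarrow> (nat \<Rightarrow> complex) \<Rightarrow> (nat \<Rightarrow> complex) \<Rightarrow> (nat \<Rightarrow> complex) \<Rightarrow> complex" where
  "alpha_star k i lam mu x =
     (let t = Max {l\<in>{i..k}. lam l \<noteq> mu l} in
       (\<Sum>l=i..t. (lam l - mu l) * (\<Prod>nu\<in>{l<..t}. x i - x nu)))"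

definition D_set :: "nat \<Rightarrow> (nat \<Rightarrow> 'n::finite cmat) \<Rightarrow> (nat \<Rightarrow> complex) set" where
  "D_set k S = {x. \<forall>i<k. \<forall>lam mu. is_joint_eigval k S i lam \<and> is_joint_eigval k S i mu \<and>
        (\<exists>l\<in>{i..k}. lam l \<noteq> mu l) \<longrightarrow> alpha_star k i lam mu x \<noteq> 0}"

definition unfold_coeff :: "nat \<Rightarrow> (nat \<Rightarrow> 'n::finite cmat) \<Rightarrow> 'n cmat \<Rightarrow> (nat \<Rightarrow> complex) \<Rightarrow> complex \<Rightarrow> 'n cmat" where
  "unfold_coeff k S N x z =
     (\<Sum>l\<le>k. mat (1 / (\<Prod>nu\<le>l. (z - x nu))) ** S l) + mat (1 / (z - x 0)) ** N"

definition is_partition :: "nat \<Rightarrow> nat \<Rightarrow> (nat \<Rightarrow> nat set) \<Rightarrow> bool" where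
  "is_partition k r I \<longleftrightarrow> (\<forall>l\<le>r. I l \<noteq> {}) \<and>
     (\<forall>l\<le>r. \<forall>l'\<le>r. l \<noteq> l' \<longrightarrow> I l \<inter> I l' = {}) \<and> (\<Union>l\<le>r. I l) = {0..k}"

definition iota :: "nat \<Rightarrow> (nat \<Rightarrow> nat set) \<Rightarrow> (nat \<Rightarrow> complex) \<Rightarrow> nat \<Rightarrow> complex" where
  "iota r I c i = c (THE l. l \<le> r \<and> i \<in> I l)"

definition blk_idx :: "(nat \<Rightarrow> nat set) \<Rightarrow> nat \<Rightarrow> nat \<Rightarrow> nat" where
  "blk_idx I j nu = sorted_list_of_set (I j) ! nu"

definition blk_k :: "(nat \<Rightarrow> nat set) \<Rightarrow> nat \<Rightarrow> nat" where
  "blk_k I j = card (I j) - 1"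

end

theory Submission
  imports Defs
begin


definition cntI :: "nat set \<Rightarrow> nat \<Rightarrow> nat" where
  "cntI Ij l = card {mu\<in>Ij. mu \<le> l}"

definition QI :: "(nat \<Rightarrow> complex) \<Rightarrow> nat set \<Rightarrow> nat \<Rightarrow> complex \<Rightarrow> complex" where
  "QI x Ij l z = (\<Prod>mu\<in>{..l}-Ij. (z - x mu))"

lemma prod_split:
  assumes hx: "\<forall>mu\<le>k. (x mu = cj \<longleftrightarrow> mu \<in> Ij)" and l: "l \<le> k"
  shows "(\<Prod>mu\<le>l. (z - x mu)) = (z - cj) ^ cntI Ij l * QI x Ij l z"
proof -
  have e: "{..l} = ({..l} \<inter> Ij) \<union> ({..l} - Ij)" by auto
  have "(\<Prod>mu\<le>l. (z - x mu)) = (\<Prod>mu\<in>{..l} \<inter> Ij. (z - x mu)) * (\<Prod>mu\<in>{..l}-Ij. (z - x mu))"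
    by (subst e, rule prod.union_disjoint) auto
  also have "(\<Prod>mu\<in>{..l} \<inter> Ij. (z - x mu)) = (\<Prod>mu\<in>{..l} \<inter> Ij. (z - cj))"
    using hx l by (intro prod.cong) auto
  also have "\<dots> = (z - cj) ^ card ({..l} \<inter> Ij)" by simp
  also have "{..l} \<inter> Ij = {mu\<in>Ij. mu \<le> l}" by auto
  finally show ?thesis unfolding cntI_def QI_def by simp
qed

lemma QI_nz:
  assumes hx: "\<forall>mu\<le>k. (x mu = cj \<longleftrightarrow> mu \<in> Ij)" and l: "l \<le> k"
  shows "QI x Ij l cj \<noteq> 0"
proof -
  have "\<forall>mu\<in>{..l}-Ij. cj - x mu \<noteq> 0" using hx l by (metis DiffE atMost_iff eq_iff_diff_eq_0 le_trans)
  then show ?thesis unfolding QI_def by simp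
qed

lemma term_lim:
  assumes hx: "\<forall>mu\<le>k. (x mu = cj \<longleftrightarrow> mu \<in> Ij)" and l: "l \<le> k"
    and c: "cntI Ij l \<le> Suc m"
  shows "((\<lambda>z. (z - cj) ^ Suc m / (\<Prod>mu\<le>l. (z - x mu))) \<longlongrightarrow>
           (if cntI Ij l = Suc m then 1 / QI x Ij l cj else 0)) (at cj)"
proof -
  let ?f = "\<lambda>z. (z - cj) ^ (Suc m - cntI Ij l) / QI x Ij l z"
  have Q: "QI x Ij l cj \<noteq> 0" using QI_nz[OF hx l] .
  have "isCont ?f cj" unfolding QI_def using Q unfolding QI_def
    by (intro continuous_intros) auto
  then have "(?f \<longlongrightarrow> ?f cj) (at cj)" by (simp add: isCont_def)
  moreover have "?f cj = (if cntI Ij l = Suc m then 1 / QI x Ij l cj else 0)"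
    using c by auto
  moreover have "\<forall>\<^sub>F z in at cj. ?f z = (z - cj) ^ Suc m / (\<Prod>mu\<le>l. (z - x mu))"
  proof -
    have "(z - cj) ^ Suc m / (\<Prod>mu\<le>l. (z - x mu)) = ?f z" if "z \<noteq> cj" for z
    proof -
      have "(z - cj) ^ Suc m = (z - cj) ^ (Suc m - cntI Ij l) * (z - cj) ^ cntI Ij l"
        using c by (simp flip: power_add)
      then show ?thesis using that by (simp add: prod_split[OF hx l])
    qed
    then show ?thesis by (auto simp: eventually_at_filter)
  qed
  ultimately show ?thesis by (auto intro: Lim_transform_eventually)
qed

definition lhsF :: "nat \<Rightarrow> (nat \<Rightarrow> complex) \<Rightarrow> (nat \<Rightarrow> complex) \<Rightarrow> complex \<Rightarrow> complex \<Rightarrow> complex" where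
  "lhsF k x d dN z = (\<Sum>l\<le>k. 1 / (\<Prod>nu\<le>l. (z - x nu)) * d l) + 1 / (z - x 0) * dN"

definition rhsF :: "nat \<Rightarrow> (nat \<Rightarrow> nat) \<Rightarrow> (nat \<Rightarrow> complex) \<Rightarrow> (nat \<Rightarrow> nat \<Rightarrow> complex) \<Rightarrow> complex \<Rightarrow> complex" where
  "rhsF r K c b z = (\<Sum>j\<le>r. \<Sum>nu\<le>K j. 1 / (z - c j) ^ (nu + 1) * b j nu)"

lemma cntI0: "cntI Ij 0 = (if 0 \<in> Ij then 1 else 0)"
proof -
  have "{mu\<in>Ij. mu \<le> 0} = (if 0 \<in> Ij then {0} else {})" by auto
  then show ?thesis unfolding cntI_def by simp
qed

lemma LHS_lim:
  assumes hx: "\<forall>mu\<le>k. (x mu = cj \<longleftrightarrow> mu \<in> Ij)"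
    and hd: "\<forall>l\<le>k. Suc m < cntI Ij l \<longrightarrow> d l = 0"
  shows "((\<lambda>z. (z - cj) ^ Suc m * lhsF k x d dN z) \<longlongrightarrow>
     (\<Sum>l\<le>k. if cntI Ij l = Suc m then d l / QI x Ij l cj else 0) + (if 0 \<in> Ij \<and> m = 0 then dN else 0)) (at cj)"
proof -
  have eq: "(\<lambda>z. (z - cj) ^ Suc m * lhsF k x d dN z) =
    (\<lambda>z. (\<Sum>l\<le>k. d l * ((z - cj) ^ Suc m / (\<Prod>nu\<le>l. (z - x nu)))) +
         dN * ((z - cj) ^ Suc m / (\<Prod>nu\<le>0. (z - x nu))))"
    by (auto simp: lhsF_def sum_distrib_left distrib_left mult_ac)
  have t1: "((\<lambda>z. d l * ((z - cj) ^ Suc m / (\<Prod>nu\<le>l. (z - x nu)))) \<longlongrightarrow>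
      (if cntI Ij l = Suc m then d l / QI x Ij l cj else 0)) (at cj)" if l: "l \<in> {..k}" for l
  proof (cases "Suc m < cntI Ij l")
    case True
    then show ?thesis using hd l by simp
  next
    case False
    have "((\<lambda>z. d l * ((z - cj) ^ Suc m / (\<Prod>nu\<le>l. (z - x nu)))) \<longlongrightarrow>
      d l * (if cntI Ij l = Suc m then 1 / QI x Ij l cj else 0)) (at cj)"
      using l False by (intro tendsto_mult_left term_lim[OF hx]) auto
    moreover have e: "d l * (if cntI Ij l = Suc m then 1 / QI x Ij l cj else 0) =
       (if cntI Ij l = Suc m then d l / QI x Ij l cj else 0)" by simp
    ultimately show ?thesis by (simp only: e)
  qed
  have t2: "((\<lambda>z. dN * ((z - cj) ^ Suc m / (\<Prod>nu\<le>0. (z - x nu)))) \<longlongrightarrow>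
      (if 0 \<in> Ij \<and> m = 0 then dN else 0)) (at cj)"
  proof -
    have "((\<lambda>z. dN * ((z - cj) ^ Suc m / (\<Prod>nu\<le>0. (z - x nu)))) \<longlongrightarrow>
      dN * (if cntI Ij 0 = Suc m then 1 / QI x Ij 0 cj else 0)) (at cj)"
      by (intro tendsto_mult_left term_lim[OF hx]) (auto simp: cntI0)
    moreover have "0 \<in> Ij \<Longrightarrow> QI x Ij 0 cj = 1" unfolding QI_def
      by (metis Diff_iff atMost_0 empty_iff insert_iff prod.empty subsetI subset_antisym Diff_eq_empty_iff)
    ultimately show ?thesis by (auto simp: cntI0 split: if_splits)
  qed
  show ?thesis unfolding eq by (intro tendsto_add tendsto_sum t1 t2)
qed

lemma RHS_lim:
  assumes inj: "inj_on c {..r}" and j: "j \<le> r" and mK: "m \<le> K j"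
    and hb: "\<forall>nu. m < nu \<and> nu \<le> K j \<longrightarrow> b j nu = 0"
  shows "((\<lambda>z. (z - c j) ^ Suc m * rhsF r K c b z) \<longlongrightarrow> b j m) (at (c j))"
proof -
  define T where "T = (\<lambda>j' nu z. (if j' = j then (if nu \<le> m then (z - c j) ^ (m - nu) * b j nu else 0)
      else (z - c j) ^ Suc m / (z - c j') ^ (nu + 1) * b j' nu))"
  define F where "F z = (\<Sum>j'\<le>r. \<Sum>nu\<le>K j'. T j' nu z)" for z
  have eq: "(z - c j) ^ Suc m * rhsF r K c b z = F z" if z: "z \<noteq> c j" for z
    unfolding rhsF_def F_def sum_distrib_left
  proof (intro sum.cong refl)
    fix j' nu assume j': "j' \<in> {..r}" and nu: "nu \<in> {..K j'}"
    show "(z - c j) ^ Suc m * (1 / (z - c j') ^ (nu + 1) * b j' nu) = T j' nu z"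
    proof (cases "j' = j")
      case True
      show ?thesis
      proof (cases "nu \<le> m")
        case True
        have "(z - c j) ^ Suc m = (z - c j) ^ (m - nu) * (z - c j) ^ (nu + 1)"
          using True by (simp flip: power_add)
        then show ?thesis using \<open>j' = j\<close> True z by (simp add: T_def)
      next
        case False
        then show ?thesis using \<open>j' = j\<close> hb nu by (simp add: T_def)
      qed
    next
      case False
      then show ?thesis by (simp add: T_def)
    qed
  qed
  have cT: "isCont (T j' nu) (c j)" if j': "j' \<le> r" for j' nu
  proof (cases "j' = j")
    case True
    then show ?thesis by (cases "nu \<le> m") (simp_all add: T_def)
  next
    case False
    then have "c j' \<noteq> c j" using inj j j' by (auto dest: inj_onD)
    then show ?thesis using False unfolding T_def by (simp only: if_False, intro continuous_intros) auto
  qed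
  have cF: "isCont F (c j)" unfolding F_def by (intro continuous_intros cT) auto
  have vT: "T j' nu (c j) = (if j' = j then (if nu = m then b j m else 0) else 0)" for j' nu
    by (auto simp: T_def)
  have vF: "F (c j) = b j m"
  proof -
    have "(\<Sum>nu\<le>K j'. (if j' = j then (if nu = m then b j m else 0) else 0)) = (if j' = j then b j m else 0)"
      for j' using mK by (cases "j' = j") auto
    then show ?thesis unfolding F_def vT using j by simp
  qed
  have "(F \<longlongrightarrow> b j m) (at (c j))" using cF vF by (simp add: isCont_def)
  moreover have "\<forall>\<^sub>F z in at (c j). F z = (z - c j) ^ Suc m * rhsF r K c b z"
    using eq by (auto simp: eventually_at_filter)
  ultimately show ?thesis by (rule Lim_transform_eventually)
qed

lemma coef:
  assumes inj: "inj_on c {..r}" and j: "j \<le> r" and hx: "\<forall>mu\<le>k. (x mu = c j \<longleftrightarrow> mu \<in> Ij)"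
    and pf: "\<forall>z. (\<forall>j'\<le>r. z \<noteq> c j') \<longrightarrow> lhsF k x d dN z = rhsF r K c b z"
    and mK: "m \<le> K j" and hb: "\<forall>nu. m < nu \<and> nu \<le> K j \<longrightarrow> b j nu = 0"
    and hd: "\<forall>l\<le>k. Suc m < cntI Ij l \<longrightarrow> d l = 0"
  shows "b j m = (\<Sum>l\<le>k. if cntI Ij l = Suc m then d l / QI x Ij l (c j) else 0) + (if 0 \<in> Ij \<and> m = 0 then dN else 0)"
proof -
  have ev: "\<forall>\<^sub>F z in at (c j). \<forall>j'\<in>{..r}. z \<noteq> c j'"
  proof (rule eventually_ball_finite)
    show "\<forall>j'\<in>{..r}. \<forall>\<^sub>F z in at (c j). z \<noteq> c j'"
    proof
      fix j' assume "j' \<in> {..r}"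
      show "\<forall>\<^sub>F z in at (c j). z \<noteq> c j'"
      proof (cases "c j' = c j")
        case True then show ?thesis by (simp add: eventually_at_filter)
      next
        case False
        then show ?thesis by (intro tendsto_imp_eventually_ne[OF tendsto_ident_at]) auto
      qed
    qed
  qed auto
  have "\<forall>\<^sub>F z in at (c j). (z - c j) ^ Suc m * rhsF r K c b z = (z - c j) ^ Suc m * lhsF k x d dN z"
    using ev by eventually_elim (use pf in auto)
  then have l1: "((\<lambda>z. (z - c j) ^ Suc m * lhsF k x d dN z) \<longlongrightarrow> b j m) (at (c j))"
    by (rule Lim_transform_eventually[OF RHS_lim[of c r j m K b, OF inj j mK hb]])
  show ?thesis
    by (rule tendsto_unique[OF _ l1 LHS_lim[OF hx hd]]) simp
qed



lemma mat_mult_entry: "(mat a ** (M::'n::finite cmat)) $ p $ q = a * M $ p $ q"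
proof -
  have "(mat a ** M) $ p $ q = (\<Sum>k\<in>UNIV. (if p = k then a else 0) * M $ k $ q)"
    by (simp add: matrix_matrix_mult_def mat_def)
  also have "\<dots> = (\<Sum>k\<in>UNIV. if k = p then a * M $ k $ q else 0)"
    by (intro sum.cong) auto
  also have "\<dots> = a * M $ p $ q" by (simp add: sum.delta)
  finally show ?thesis .
qed

lemma diag_mult_left: assumes "is_diag D"
  shows "(D ** (M::'n::finite cmat)) $ p $ q = D $ p $ p * M $ p $ q"
proof -
  have "(D ** M) $ p $ q = (\<Sum>k\<in>UNIV. D $ p $ k * M $ k $ q)" by (simp add: matrix_matrix_mult_def)
  also have "\<dots> = (\<Sum>k\<in>UNIV. if k = p then D $ p $ p * M $ k $ q else 0)"
    using assms by (intro sum.cong) (auto simp: is_diag_def)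
  finally show ?thesis by (simp add: sum.delta)
qed

lemma diag_mult_right: assumes "is_diag D"
  shows "((M::'n::finite cmat) ** D) $ p $ q = M $ p $ q * D $ q $ q"
proof -
  have "(M ** D) $ p $ q = (\<Sum>k\<in>UNIV. M $ p $ k * D $ k $ q)" by (simp add: matrix_matrix_mult_def)
  also have "\<dots> = (\<Sum>k\<in>UNIV. if k = q then M $ p $ k * D $ q $ q else 0)"
    using assms by (intro sum.cong) (auto simp: is_diag_def)
  finally show ?thesis by (simp add: sum.delta)
qed

lemma diag_mult_vec: assumes "is_diag D"
  shows "(D::'n::finite cmat) *v v = (\<chi> p. D $ p $ p * v $ p)"
proof -
  have "(D *v v) $ p = D $ p $ p * v $ p" for p
  proof -
    have "(D *v v) $ p = (\<Sum>k\<in>UNIV. D $ p $ k * v $ k)" by (simp add: matrix_vector_mult_def)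
    also have "\<dots> = (\<Sum>k\<in>UNIV. if k = p then D $ p $ p * v $ k else 0)"
      using assms by (intro sum.cong) (auto simp: is_diag_def)
    finally show ?thesis by (simp add: sum.delta)
  qed
  then show ?thesis by (simp add: vec_eq_iff)
qed

lemma joint_eigsp_diag:
  assumes "\<forall>l\<in>{i..k}. is_diag (D l)"
  shows "v \<in> joint_eigsp k D i lam \<longleftrightarrow> (\<forall>p. v $ p \<noteq> 0 \<longrightarrow> (\<forall>l\<in>{i..k}. D l $ p $ p = lam l))"
proof -
  have "v \<in> joint_eigsp k D i lam \<longleftrightarrow> (\<forall>l\<in>{i..k}. \<forall>p. D l $ p $ p * v $ p = lam l * v $ p)"
    unfolding joint_eigsp_def using assms by (auto simp: diag_mult_vec vec_eq_iff)
  also have "\<dots> \<longleftrightarrow> (\<forall>p. v $ p \<noteq> 0 \<longrightarrow> (\<forall>l\<in>{i..k}. D l $ p $ p = lam l))"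
    by auto
  finally show ?thesis .
qed

lemma joint_eigspaces_diag:
  assumes "\<forall>l\<in>{i..k}. is_diag (D l)"
  shows "E \<in> joint_eigspaces k D i \<longleftrightarrow>
    (\<exists>p. E = {v. \<forall>q. v $ q \<noteq> 0 \<longrightarrow> (\<forall>l\<in>{i..k}. D l $ q $ q = D l $ p $ p)})"
proof
  assume "E \<in> joint_eigspaces k D i"
  then obtain lam where E: "E = joint_eigsp k D i lam" and ne: "E \<noteq> {0}"
    unfolding joint_eigspaces_def by auto
  have "0 \<in> E" unfolding E joint_eigsp_diag[OF assms] by simp
  then obtain v where v: "v \<in> E" "v \<noteq> 0" using ne by blast
  then obtain p where p: "v $ p \<noteq> 0" by (auto simp: vec_eq_iff)
  then have lp: "\<forall>l\<in>{i..k}. D l $ p $ p = lam l" using v unfolding E joint_eigsp_diag[OF assms] by blast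
  show "\<exists>p. E = {v. \<forall>q. v $ q \<noteq> 0 \<longrightarrow> (\<forall>l\<in>{i..k}. D l $ q $ q = D l $ p $ p)}"
    by (rule exI[of _ p]) (auto simp: E joint_eigsp_diag[OF assms] lp)
next
  assume "\<exists>p. E = {v. \<forall>q. v $ q \<noteq> 0 \<longrightarrow> (\<forall>l\<in>{i..k}. D l $ q $ q = D l $ p $ p)}"
  then obtain p where E: "E = {v. \<forall>q. v $ q \<noteq> 0 \<longrightarrow> (\<forall>l\<in>{i..k}. D l $ q $ q = D l $ p $ p)}" by blast
  have E': "E = joint_eigsp k D i (\<lambda>l. D l $ p $ p)"
    unfolding E by (auto simp: joint_eigsp_diag[OF assms])
  have "axis p 1 \<in> E" unfolding E by (auto simp: axis_def)
  moreover have "axis p (1::complex) \<noteq> 0" by (simp add: axis_eq_0_iff)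
  ultimately have "E \<noteq> {0}" by auto
  then show "E \<in> joint_eigspaces k D i" unfolding joint_eigspaces_def using E' by blast
qed

lemma joint_eigspaces_eq:
  assumes "\<forall>l\<in>{i..k}. is_diag (D l)" and "\<forall>l\<in>{i'..k'}. is_diag (D' l)"
    and "\<forall>p q. (\<forall>l\<in>{i..k}. D l $ p $ p = D l $ q $ q) \<longleftrightarrow> (\<forall>l\<in>{i'..k'}. D' l $ p $ p = D' l $ q $ q)"
  shows "joint_eigspaces k D i = joint_eigspaces k' D' i'"
proof -
  have eqs: "{v. \<forall>q. v $ q \<noteq> 0 \<longrightarrow> (\<forall>l\<in>{i..k}. D l $ q $ q = D l $ p $ p)} =
        {v. \<forall>q. v $ q \<noteq> 0 \<longrightarrow> (\<forall>l\<in>{i'..k'}. D' l $ q $ q = D' l $ p $ p)}" for p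
    using assms(3) by blast
  show ?thesis
    unfolding set_eq_iff[of "joint_eigspaces _ _ _"] joint_eigspaces_diag[OF assms(1)] joint_eigspaces_diag[OF assms(2)]
    by (simp only: eqs) simp
qed

lemma joint_eigsp_subspace: "vec.subspace (joint_eigsp k D i lam)"
  unfolding vec.subspace_def joint_eigsp_def
  by (auto simp: matrix_vector_right_distrib vector_scalar_commute vector_add_ldistrib)



lemma span_UN_span: "vec.span (\<Union>x\<in>X. vec.span (F x)) = vec.span (\<Union>x\<in>X. F x)"
proof (rule antisym)
  show "vec.span (\<Union>x\<in>X. vec.span (F x)) \<subseteq> vec.span (\<Union>x\<in>X. F x)"
    by (rule vec.span_minimal) (auto intro: vec.span_mono[THEN subsetD])
  show "vec.span (\<Union>x\<in>X. F x) \<subseteq> vec.span (\<Union>x\<in>X. vec.span (F x))"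
    by (rule vec.span_mono) (auto intro: vec.span_superset[THEN subsetD])
qed

lemma comp_lemma:
  assumes hV: "\<forall>i\<le>k. \<forall>j<length (m i). vec.subspace (V i j)"
    and hphi: "\<forall>i<k. (\<forall>mu<length (m i). phi i mu < length (m (Suc i))) \<and>
             (\<forall>j<length (m (Suc i)).
                V (Suc i) j = vec.span (\<Union>mu\<in>{mu. mu < length (m i) \<and> phi i mu = j}. V i mu))"
  shows "i + d \<le> k \<Longrightarrow> (\<forall>mu<length (m i). phi_comp phi i d mu < length (m (i + d))) \<and>
     (\<forall>j<length (m (i + d)). V (i + d) j =
        vec.span (\<Union>mu\<in>{mu. mu < length (m i) \<and> phi_comp phi i d mu = j}. (V i mu :: (complex^'n::finite) set)))"
proof (induction d)
  case 0
  have "V i j = vec.span (\<Union>mu\<in>{mu. mu < length (m i) \<and> mu = j}. V i mu)" if "j < length (m i)" for j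
  proof -
    have e: "(\<Union>mu\<in>{mu. mu < length (m i) \<and> mu = j}. V i mu) = V i j" using that by auto
    have "vec.subspace (V i j)" using hV that 0 by simp
    then have sp: "vec.span (V i j) = V i j" by (simp only: vec.span_eq_iff)
    show ?thesis unfolding e sp ..
  qed
  then show ?case by simp
next
  case (Suc d)
  then have IH1: "\<forall>mu<length (m i). phi_comp phi i d mu < length (m (i + d))"
    and IH2: "\<forall>j<length (m (i + d)). V (i + d) j =
        vec.span (\<Union>mu\<in>{mu. mu < length (m i) \<and> phi_comp phi i d mu = j}. V i mu)" by auto
  have lt: "i + d < k" using Suc by simp
  have P1: "\<forall>mu<length (m (i + d)). phi (i + d) mu < length (m (Suc (i + d)))"
    and P2: "\<forall>j<length (m (Suc (i + d))). V (Suc (i + d)) j =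
         vec.span (\<Union>mu\<in>{mu. mu < length (m (i + d)) \<and> phi (i + d) mu = j}. V (i + d) mu)"
    using hphi lt by auto
  show ?case
  proof (intro conjI allI impI)
    fix mu assume "mu < length (m i)"
    then show "phi_comp phi i (Suc d) mu < length (m (i + Suc d))" using IH1 P1 by simp
  next
    fix j assume j: "j < length (m (i + Suc d))"
    have "V (i + Suc d) j = vec.span (\<Union>mu'\<in>{mu. mu < length (m (i + d)) \<and> phi (i + d) mu = j}. V (i + d) mu')"
      using P2 j by simp
    also have "\<dots> = vec.span (\<Union>mu'\<in>{mu. mu < length (m (i + d)) \<and> phi (i + d) mu = j}.
        vec.span (\<Union>mu\<in>{mu. mu < length (m i) \<and> phi_comp phi i d mu = mu'}. V i mu))"
      by (intro arg_cong[where f = vec.span] SUP_cong refl) (use IH2 in blast)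
    also have "\<dots> = vec.span (\<Union>mu'\<in>{mu. mu < length (m (i + d)) \<and> phi (i + d) mu = j}.
        (\<Union>mu\<in>{mu. mu < length (m i) \<and> phi_comp phi i d mu = mu'}. V i mu))"
      by (rule span_UN_span)
    also have "(\<Union>mu'\<in>{mu. mu < length (m (i + d)) \<and> phi (i + d) mu = j}.
        (\<Union>mu\<in>{mu. mu < length (m i) \<and> phi_comp phi i d mu = mu'}. V i mu)) =
        (\<Union>mu\<in>{mu. mu < length (m i) \<and> phi_comp phi i (Suc d) mu = j}. V i mu)"
    proof -
      have pc: "phi_comp phi i (Suc d) mu = phi (i + d) (phi_comp phi i d mu)" for mu by simp
      show ?thesis using IH1 unfolding pc by blast
    qed
    finally show "V (i + Suc d) j = vec.span (\<Union>mu\<in>{mu. mu < length (m i) \<and> phi_comp phi i (Suc d) mu = j}. V i mu)" .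
  qed
qed





lemma cnt_mono: "finite Ij \<Longrightarrow> l \<le> l' \<Longrightarrow> cntI Ij l \<le> cntI Ij l'"
  unfolding cntI_def by (rule card_mono) auto

lemma cnt_le_card: "finite Ij \<Longrightarrow> cntI Ij l \<le> card Ij"
  unfolding cntI_def by (rule card_mono) auto

lemma cnt_strict: "finite Ij \<Longrightarrow> mu \<in> Ij \<Longrightarrow> l < mu \<Longrightarrow> cntI Ij l < cntI Ij mu"
  unfolding cntI_def
proof (rule psubset_card_mono)
  assume "mu \<in> Ij" "l < mu"
  then have "mu \<in> {mu \<in> Ij. mu \<le> mu}" "mu \<notin> {mu \<in> Ij. mu \<le> l}" by auto
  then have ne: "{mu \<in> Ij. mu \<le> l} \<noteq> {mu' \<in> Ij. mu' \<le> mu}" by blast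
  show "{mu \<in> Ij. mu \<le> l} \<subset> {mu' \<in> Ij. mu' \<le> mu}" using \<open>l < mu\<close> ne by (intro psubsetI) auto
qed auto

lemma cnt_nth:
  assumes fin: "finite Ij" and nu: "nu < card Ij"
  shows "cntI Ij (sorted_list_of_set Ij ! nu) = Suc nu"
proof -
  let ?xs = "sorted_list_of_set Ij"
  have len: "length ?xs = card Ij" by simp
  have st: "sorted_wrt (<) ?xs" by (rule strict_sorted_list_of_set)
  have so: "sorted ?xs" by simp
  have di: "distinct ?xs" by simp
  have set: "set ?xs = Ij" using fin by simp
  have "{mu\<in>Ij. mu \<le> ?xs ! nu} = (\<lambda>a. ?xs ! a) ` {..nu}"
  proof (rule set_eqI, rule iffI)
    fix mu assume "mu \<in> {mu\<in>Ij. mu \<le> ?xs ! nu}"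
    then have mu: "mu \<in> set ?xs" "mu \<le> ?xs ! nu" using set by auto
    then obtain a where a: "a < length ?xs" "?xs ! a = mu" by (auto simp: in_set_conv_nth)
    have "a \<le> nu"
    proof (rule ccontr)
      assume "\<not> a \<le> nu"
      then have "?xs ! nu < ?xs ! a" using sorted_wrt_nth_less[OF st, of nu a] a by simp
      then show False using mu a by simp
    qed
    then show "mu \<in> (\<lambda>a. ?xs ! a) ` {..nu}" using a by auto
  next
    fix mu assume "mu \<in> (\<lambda>a. ?xs ! a) ` {..nu}"
    then obtain a where a: "a \<le> nu" "mu = ?xs ! a" by auto
    have "?xs ! a \<le> ?xs ! nu" using sorted_nth_mono[OF so a(1)] nu len by simp
    moreover have "?xs ! a \<in> Ij" using a nu len set nth_mem[of a ?xs] by simp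
    ultimately show "mu \<in> {mu\<in>Ij. mu \<le> ?xs ! nu}" using a by simp
  qed
  moreover have "inj_on (\<lambda>a. ?xs ! a) {..nu}"
    using di nu len by (auto simp: inj_on_def nth_eq_iff_index_eq)
  ultimately show ?thesis unfolding cntI_def by (simp add: card_image)
qed

lemma nth_in:
  assumes fin: "finite Ij" and nu: "nu < card Ij"
  shows "sorted_list_of_set Ij ! nu \<in> Ij"
  using fin nu nth_mem[of nu "sorted_list_of_set Ij"] by simp

lemma cnt_below:
  assumes fin: "finite Ij" and nu: "nu < card Ij" and l: "l < sorted_list_of_set Ij ! nu"
  shows "cntI Ij l \<le> nu"
  using cnt_strict[OF fin nth_in[OF fin nu] l] cnt_nth[OF fin nu] by simp

lemma cnt_above:
  assumes fin: "finite Ij" and nu: "nu < card Ij" and l: "sorted_list_of_set Ij ! nu \<le> l"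
  shows "Suc nu \<le> cntI Ij l"
  using cnt_mono[OF fin l] cnt_nth[OF fin nu] by simp

lemma nth_mono_sorted:
  assumes fin: "finite Ij" and "a \<le> b" and "b < card Ij"
  shows "sorted_list_of_set Ij ! a \<le> sorted_list_of_set Ij ! b"
  using sorted_nth_mono[of "sorted_list_of_set Ij" a b] assms by simp




lemma unfold_entry: "unfold_coeff k S N x z $ p $ q = lhsF k x (\<lambda>l. S l $ p $ q) (N $ p $ q) z"
  by (simp add: unfold_coeff_def lhsF_def mat_mult_entry)

lemma rhs_entry: "(\<Sum>j\<le>r. \<Sum>nu\<le>K j. mat (1 / (z - c j) ^ (nu + 1)) ** (A j nu :: 'n::finite cmat)) $ p $ q
   = rhsF r K c (\<lambda>j nu. A j nu $ p $ q) z"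
  by (simp add: rhsF_def mat_mult_entry)

lemma lhsF_diff: "lhsF k x (\<lambda>l. d1 l - d2 l) (n1 - n2) z = lhsF k x d1 n1 z - lhsF k x d2 n2 z"
  by (simp add: lhsF_def sum_subtractf right_diff_distrib)

lemma rhsF_diff: "rhsF r K c (\<lambda>j nu. b1 j nu - b2 j nu) z = rhsF r K c b1 z - rhsF r K c b2 z"
  by (simp add: rhsF_def sum_subtractf right_diff_distrib)

lemma iota_eq:
  assumes part: "is_partition k r I" and l: "l \<le> r" and mu: "mu \<in> I l"
  shows "iota r I c mu = c l"
proof -
  have "(THE l'. l' \<le> r \<and> mu \<in> I l') = l"
    using part l mu unfolding is_partition_def by (intro the_equality) blast+
  then show ?thesis unfolding iota_def by simp
qed

lemma down_induct:
  fixes K m :: nat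
  assumes "\<And>m. m \<le> K \<Longrightarrow> (\<And>nu. m < nu \<Longrightarrow> nu \<le> K \<Longrightarrow> P nu) \<Longrightarrow> P m"
  shows "m \<le> K \<Longrightarrow> P m"
proof (induction "K - m" arbitrary: m rule: less_induct)
  case less
  show ?case
    by (rule assms[OF less.prems]) (rule less.hyps; use less.prems in auto)
qed

lemma nil_index_zero:
  assumes "w \<in> W" "w \<noteq> 0"
  shows "nil_index (0::'n::finite cmat) W = 1"
  unfolding nil_index_def
proof (rule Least_equality)
  show "\<forall>v\<in>W. (((*v) (0::'n cmat)) ^^ 1) v = 0" by simp
next
  fix d assume "\<forall>v\<in>W. (((*v) (0::'n cmat)) ^^ d) v = 0"
  then show "1 \<le> d" using assms by (cases d) auto
qed

lemma signature_zero:
  assumes "w \<in> W" "w \<noteq> 0"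
  shows "signature_seq (0::'n::finite cmat) W = [vec.dim W]"
  unfolding signature_seq_def nil_index_zero[OF assms] by simp


theorem mainTheorem2:
  fixes k r :: nat and S :: "nat \<Rightarrow> 'n::finite cmat" and N :: "'n cmat"
    and I :: "nat \<Rightarrow> nat set" and c :: "nat \<Rightarrow> complex"
    and A :: "nat \<Rightarrow> nat \<Rightarrow> 'n cmat"
  assumes nf: "htl_nf k S N"
    and part: "is_partition k r I" and zero_in: "0 \<in> I 0"
    and distinct: "inj_on c {0..r}"
    and genD: "iota r I c \<in> D_set k S"
    and pfd: "\<And>z. (\<forall>j\<le>r. z \<noteq> c j) \<Longrightarrow>
        unfold_coeff k S N (iota r I c) z =
          (\<Sum>j\<le>r. \<Sum>nu\<le>blk_k I j. mat (1 / (z - c j) ^ (nu + 1)) ** A j nu)"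
    and j_le: "j \<le> r"
  shows "\<exists>S' N'. S' 0 + N' = A j 0 \<and> (\<forall>nu\<in>{1..blk_k I j}. S' nu = A j nu) \<and>
           htl_nf (blk_k I j) S' N' \<and>
           (\<forall>m phi sig. has_spectral_type k S N m phi sig \<longrightarrow>
              has_spectral_type (blk_k I j) S' N'
                (\<lambda>nu. m (blk_idx I j nu))
                (\<lambda>nu. phi_comp phi (blk_idx I j nu) (blk_idx I j (Suc nu) - blk_idx I j nu))
                (if j = 0 then sig else (\<lambda>mu. [m (blk_idx I j 0) ! mu])))"
proof -
  define x where "x = iota r I c"
  define kj where "kj = blk_k I j"
  define ii where "ii = blk_idx I j"
  define Ij where "Ij = I j"
  define N' where "N' = (if j = 0 then N else 0)"
  define S' where "S' = (\<lambda>nu. if nu = 0 then A j 0 - N' else A j nu)"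
  have Ij_sub: "Ij \<subseteq> {0..k}" using part j_le unfolding is_partition_def Ij_def by blast
  have finI: "finite Ij" using Ij_sub finite_subset by blast
  have neI: "Ij \<noteq> {}" using part j_le unfolding is_partition_def Ij_def by blast
  have cardI: "card Ij = Suc kj"
    using finI neI unfolding kj_def blk_k_def Ij_def[symmetric] by (cases "card Ij") auto
  have ii_def': "ii nu = sorted_list_of_set Ij ! nu" for nu unfolding ii_def blk_idx_def Ij_def ..
  have inj: "inj_on c {..r}" using distinct by (simp add: atLeast0AtMost)
  have cover: "\<exists>l\<le>r. mu \<in> I l" if "mu \<le> k" for mu
    using part that unfolding is_partition_def by auto
  have hx: "\<forall>mu\<le>k. (x mu = c j \<longleftrightarrow> mu \<in> Ij)"
  proof (intro allI impI)
    fix mu assume mu: "mu \<le> k"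
    obtain l where l: "l \<le> r" "mu \<in> I l" using cover[OF mu] by blast
    have xl: "x mu = c l" unfolding x_def by (rule iota_eq[OF part l])
    have "c l = c j \<longleftrightarrow> l = j" using inj l(1) j_le by (auto dest: inj_onD)
    moreover have "l = j \<longleftrightarrow> mu \<in> Ij"
      using part l j_le unfolding is_partition_def Ij_def by blast
    ultimately show "x mu = c j \<longleftrightarrow> mu \<in> Ij" using xl by simp
  qed
  have zI: "0 \<in> Ij \<longleftrightarrow> j = 0"
    using part zero_in j_le unfolding is_partition_def Ij_def by blast
  have ii_le: "ii nu \<le> k" if "nu \<le> kj" for nu
    using nth_in[OF finI, of nu] that cardI Ij_sub unfolding ii_def' by auto
  have Sdiag: "\<forall>l\<le>k. is_diag (S l)" and Nnil: "mat_nilpotent N" and Scomm: "\<forall>l\<le>k. S l ** N = N ** S l"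
    using nf unfolding htl_nf_def by auto
  have Soff: "S l $ p $ q = 0" if "l \<le> k" "p \<noteq> q" for l p q
    using Sdiag that unfolding is_diag_def by auto
  have pfs: "\<forall>z. (\<forall>j'\<le>r. z \<noteq> c j') \<longrightarrow>
      lhsF k x (\<lambda>l. S l $ p $ q) (N $ p $ q) z = rhsF r (blk_k I) c (\<lambda>j' nu. A j' nu $ p $ q) z" for p q
  proof (intro allI impI)
    fix z assume z: "\<forall>j'\<le>r. z \<noteq> c j'"
    have "unfold_coeff k S N x z $ p $ q = (\<Sum>j\<le>r. \<Sum>nu\<le>blk_k I j. mat (1 / (z - c j) ^ (nu + 1)) ** A j nu) $ p $ q"
      using pfd[OF z] unfolding x_def by simp
    then show "lhsF k x (\<lambda>l. S l $ p $ q) (N $ p $ q) z = rhsF r (blk_k I) c (\<lambda>j' nu. A j' nu $ p $ q) z"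
      by (simp only: unfold_entry rhs_entry)
  qed
  have coefj: "b j m = (\<Sum>l\<le>k. if cntI Ij l = Suc m then d l / QI x Ij l (c j) else 0) + (if j = 0 \<and> m = 0 then dN else 0)"
    if pf: "\<forall>z. (\<forall>j'\<le>r. z \<noteq> c j') \<longrightarrow> lhsF k x d dN z = rhsF r (blk_k I) c b z"
      and mK: "m \<le> kj" and hb: "\<forall>nu. m < nu \<and> nu \<le> kj \<longrightarrow> b j nu = 0"
      and hd: "\<forall>l\<le>k. Suc m < cntI Ij l \<longrightarrow> d l = 0" for d dN b m
    using coef[OF inj j_le hx pf, of m] mK hb hd zI unfolding kj_def by simp

  have offd: "A j m $ p $ q = (if j = 0 \<and> m = 0 then N $ p $ q else 0)" if pq: "p \<noteq> q" and m: "m \<le> kj" for p q m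
  proof -
    have step: "A j m' $ p $ q = (if j = 0 \<and> m' = 0 then N $ p $ q else 0)"
      if mk: "m' \<le> kj" and IH: "\<And>nu'. m' < nu' \<Longrightarrow> nu' \<le> kj \<Longrightarrow>
          A j nu' $ p $ q = (if j = 0 \<and> nu' = 0 then N $ p $ q else 0)" for m'
    proof -
      have hb: "\<forall>nu. m' < nu \<and> nu \<le> kj \<longrightarrow> A j nu $ p $ q = 0" using IH by auto
      have hd: "\<forall>l\<le>k. Suc m' < cntI Ij l \<longrightarrow> S l $ p $ q = 0" using Soff pq by auto
      have "A j m' $ p $ q = (\<Sum>l\<le>k. if cntI Ij l = Suc m' then S l $ p $ q / QI x Ij l (c j) else 0)
          + (if j = 0 \<and> m' = 0 then N $ p $ q else 0)"
        using coefj[of "\<lambda>l. S l $ p $ q" "N $ p $ q" "\<lambda>j' nu. A j' nu $ p $ q" m', OF pfs mk hb hd] by simp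
      moreover have "(\<Sum>l\<le>k. if cntI Ij l = Suc m' then S l $ p $ q / QI x Ij l (c j) else 0) = 0"
        using Soff pq by (intro sum.neutral ballI) auto
      ultimately show ?thesis by simp
    qed
    show ?thesis by (rule down_induct[of kj "\<lambda>m. A j m $ p $ q = (if j = 0 \<and> m = 0 then N $ p $ q else 0)", OF step m])
  qed
  have Sdiag': "is_diag (S' nu)" if "nu \<le> kj" for nu
    unfolding is_diag_def S'_def N'_def using offd that by auto
  have Ceq: "(\<forall>l\<in>{ii nu..k}. S l $ p $ p = S l $ q $ q) \<longleftrightarrow> (\<forall>nu'\<in>{nu..kj}. S' nu' $ p $ p = S' nu' $ q $ q)"
    if nu: "nu \<le> kj" for p q nu
  proof -
    define dd where "dd = (\<lambda>l. S l $ p $ p - S l $ q $ q)"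
    define dN where "dN = N $ p $ p - N $ q $ q"
    define bb where "bb = (\<lambda>j' nu'. A j' nu' $ p $ p - A j' nu' $ q $ q)"
    define da where "da = (\<lambda>nu'. bb j nu' - (if j = 0 \<and> nu' = 0 then dN else 0))"
    have da_eq: "S' nu' $ p $ p - S' nu' $ q $ q = da nu'" for nu'
      by (simp add: S'_def N'_def da_def bb_def dN_def)
    have pf: "\<forall>z. (\<forall>j'\<le>r. z \<noteq> c j') \<longrightarrow> lhsF k x dd dN z = rhsF r (blk_k I) c bb z"
      unfolding dd_def dN_def bb_def lhsF_diff rhsF_diff using pfs[of p p] pfs[of q q] by simp
    have fwd: "da m = 0" if nu0: "nu0 \<le> kj" and h0: "\<forall>l. ii nu0 \<le> l \<and> l \<le> k \<longrightarrow> dd l = 0"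
      and m: "nu0 \<le> m" "m \<le> kj" for nu0 m
    proof -
      have lowcnt: "cntI Ij l \<le> nu0" if "l < ii nu0" for l
        using cnt_below[OF finI, of nu0 l] nu0 cardI that unfolding ii_def' by simp
      have step: "nu0 \<le> m' \<longrightarrow> da m' = 0" if mk: "m' \<le> kj"
        and IH: "\<And>nu'. m' < nu' \<Longrightarrow> nu' \<le> kj \<Longrightarrow> nu0 \<le> nu' \<longrightarrow> da nu' = 0" for m'
      proof
        assume nm: "nu0 \<le> m'"
        have hb: "\<forall>nu'. m' < nu' \<and> nu' \<le> kj \<longrightarrow> bb j nu' = 0" using IH nm by (auto simp: da_def)
        have hd: "\<forall>l\<le>k. Suc m' < cntI Ij l \<longrightarrow> dd l = 0"
        proof (intro allI impI)
          fix l assume l: "l \<le> k" "Suc m' < cntI Ij l"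
          have "\<not> l < ii nu0" using lowcnt[of l] l nm by linarith
          then show "dd l = 0" using h0 l by simp
        qed
        have "bb j m' = (\<Sum>l\<le>k. if cntI Ij l = Suc m' then dd l / QI x Ij l (c j) else 0) + (if j = 0 \<and> m' = 0 then dN else 0)"
          by (rule coefj[OF pf mk hb hd])
        moreover have "(\<Sum>l\<le>k. if cntI Ij l = Suc m' then dd l / QI x Ij l (c j) else 0) = 0"
        proof (intro sum.neutral ballI)
          fix l assume l: "l \<in> {..k}"
          show "(if cntI Ij l = Suc m' then dd l / QI x Ij l (c j) else 0) = 0"
          proof (cases "cntI Ij l = Suc m'")
            case True
            then have "\<not> l < ii nu0" using lowcnt[of l] nm by linarith
            then show ?thesis using h0 l by simp
          qed simp
        qed
        ultimately show "da m' = 0" by (simp add: da_def)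
      qed
      have "nu0 \<le> m \<longrightarrow> da m = 0"
        by (rule down_induct[of kj "\<lambda>m. nu0 \<le> m \<longrightarrow> da m = 0", OF step m(2)])
      then show ?thesis using m by simp
    qed
    have bwd: "dd l = 0" if nu0: "nu0 \<le> kj" and h0: "\<forall>m. nu0 \<le> m \<and> m \<le> kj \<longrightarrow> da m = 0"
      and l: "ii nu0 \<le> l" "l \<le> k" for nu0 l
    proof (rule ccontr)
      assume ddl: "dd l \<noteq> 0"
      define T where "T = {l. ii nu0 \<le> l \<and> l \<le> k \<and> dd l \<noteq> 0}"
      define t where "t = Max T"
      have finT: "finite T" unfolding T_def by (rule finite_subset[of _ "{..k}"]) auto
      have lT: "l \<in> T" using l ddl unfolding T_def by simp
      have tT: "t \<in> T" unfolding t_def using finT lT by (intro Max_in) auto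
      have t_max: "l' \<le> t" if "l' \<in> T" for l' unfolding t_def using finT that by simp
      have tp: "ii nu0 \<le> t" "t \<le> k" "dd t \<noteq> 0" using tT unfolding T_def by auto
      have zero_after: "dd l' = 0" if "t < l'" "l' \<le> k" for l'
        using t_max[of l'] that tp unfolding T_def by auto
      define mm where "mm = cntI Ij t - 1"
      have c1: "Suc nu0 \<le> cntI Ij t"
        using cnt_above[OF finI, of nu0 t] nu0 cardI tp unfolding ii_def' by simp
      have c2: "cntI Ij t \<le> Suc kj" using cnt_le_card[OF finI, of t] cardI by simp
      have Smm: "Suc mm = cntI Ij t" and mm1: "nu0 \<le> mm" and mm2: "mm \<le> kj"
        using c1 c2 unfolding mm_def by auto
      have gt_t: "t < l'" if "Suc mm < cntI Ij l'" for l'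
      proof (rule ccontr)
        assume "\<not> t < l'"
        then have "cntI Ij l' \<le> cntI Ij t" using cnt_mono[OF finI, of l' t] by simp
        then show False using that Smm by simp
      qed
      have hd: "\<forall>l'\<le>k. Suc mm < cntI Ij l' \<longrightarrow> dd l' = 0" using gt_t zero_after by blast
      have hb: "\<forall>nu'. mm < nu' \<and> nu' \<le> kj \<longrightarrow> bb j nu' = 0"
      proof (intro allI impI)
        fix nu' assume nu': "mm < nu' \<and> nu' \<le> kj"
        then have smk: "Suc mm \<le> kj" by simp
        have h1: "\<forall>l'. ii (Suc mm) \<le> l' \<and> l' \<le> k \<longrightarrow> dd l' = 0"
        proof (intro allI impI)
          fix l' assume l': "ii (Suc mm) \<le> l' \<and> l' \<le> k"
          have "Suc (Suc mm) \<le> cntI Ij l'"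
            using cnt_above[OF finI, of "Suc mm" l'] smk cardI l' unfolding ii_def' by simp
          then show "dd l' = 0" using gt_t[of l'] zero_after[of l'] l' by simp
        qed
        have "da nu' = 0" using fwd[OF smk h1, of nu'] nu' by simp
        then show "bb j nu' = 0" using nu' by (simp add: da_def)
      qed
      define Sig where "Sig = (\<Sum>l'\<le>k. if cntI Ij l' = Suc mm then dd l' / QI x Ij l' (c j) else 0)"
      have co: "bb j mm = Sig + (if j = 0 \<and> mm = 0 then dN else 0)"
        unfolding Sig_def by (rule coefj[OF pf mm2 hb hd])
      have "da mm = 0" using h0 mm1 mm2 by simp
      then have Sig0: "Sig = 0" using co by (simp add: da_def)
      define i0 where "i0 = ii mm"
      have i0_in: "i0 \<in> Ij" using nth_in[OF finI, of mm] mm2 cardI unfolding i0_def ii_def' by simp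
      have i0_k: "i0 \<le> k" using i0_in Ij_sub by auto
      have i0_ge: "ii nu0 \<le> i0" using nth_mono_sorted[OF finI mm1, of] mm2 cardI unfolding i0_def ii_def' by simp
      have cnt_i0: "cntI Ij i0 = Suc mm" using cnt_nth[OF finI, of mm] mm2 cardI unfolding i0_def ii_def' by simp
      have i0_le_t: "i0 \<le> t"
      proof (rule ccontr)
        assume "\<not> i0 \<le> t"
        then have "cntI Ij t \<le> mm" using cnt_below[OF finI, of mm t] mm2 cardI unfolding i0_def ii_def' by simp
        then show False using Smm by simp
      qed
      have cnt_mid: "cntI Ij l' = Suc mm" if "i0 \<le> l'" "l' \<le> t" for l'
        using cnt_mono[OF finI that(1)] cnt_mono[OF finI that(2)] cnt_i0 Smm by simp
      have Sig_eq: "Sig = (\<Sum>l'\<in>{i0..t}. dd l' / QI x Ij l' (c j))"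
        unfolding Sig_def
      proof (rule sum.mono_neutral_cong_right)
        show "finite {..k}" by simp
        show "{i0..t} \<subseteq> {..k}" using tp by auto
        show "\<forall>i\<in>{..k} - {i0..t}. (if cntI Ij i = Suc mm then dd i / QI x Ij i (c j) else 0) = 0"
        proof
          fix i assume i: "i \<in> {..k} - {i0..t}"
          show "(if cntI Ij i = Suc mm then dd i / QI x Ij i (c j) else 0) = 0"
          proof (cases "cntI Ij i = Suc mm")
            case True
            have "\<not> i < i0"
            proof
              assume "i < i0"
              then have "cntI Ij i \<le> mm" using cnt_below[OF finI, of mm i] mm2 cardI unfolding i0_def ii_def' by simp
              then show False using True by simp
            qed
            then have "t < i" using i by auto
            then show ?thesis using zero_after[of i] i by simp
          qed simp
        qed
        show "(if cntI Ij i = Suc mm then dd i / QI x Ij i (c j) else 0) = dd i / QI x Ij i (c j)"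
          if "i \<in> {i0..t}" for i using cnt_mid that by simp
      qed
      have Qsplit: "QI x Ij t (c j) = QI x Ij l' (c j) * (\<Prod>mu\<in>{l'<..t}. (c j - x mu))"
        if l': "i0 \<le> l'" "l' \<le> t" for l'
      proof -
        have disj: "{l'<..t} \<inter> Ij = {}"
        proof (rule ccontr)
          assume "{l'<..t} \<inter> Ij \<noteq> {}"
          then obtain mu where mu: "mu \<in> Ij" "l' < mu" "mu \<le> t" by auto
          have "cntI Ij l' < cntI Ij mu" by (rule cnt_strict[OF finI mu(1,2)])
          moreover have "cntI Ij mu \<le> cntI Ij t" by (rule cnt_mono[OF finI mu(3)])
          ultimately show False using cnt_mid[OF l'] Smm by simp
        qed
        have e: "{..t} - Ij = ({..l'} - Ij) \<union> {l'<..t}" using disj l' by auto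
        have "QI x Ij t (c j) = (\<Prod>mu\<in>({..l'} - Ij) \<union> {l'<..t}. (c j - x mu))"
          unfolding QI_def e ..
        also have "\<dots> = QI x Ij l' (c j) * (\<Prod>mu\<in>{l'<..t}. (c j - x mu))"
          unfolding QI_def by (rule prod.union_disjoint) auto
        finally show ?thesis .
      qed
      have Qnz: "QI x Ij l' (c j) \<noteq> 0" if "l' \<le> k" for l' using QI_nz[OF hx that] .
      have Sig_nz: "Sig \<noteq> 0"
      proof (cases "i0 < k")
        case False
        then have "i0 = t" using i0_le_t tp by simp
        then show ?thesis using Sig_eq tp Qnz[of t] by simp
      next
        case True
        have xi0: "x i0 = c j" using hx i0_k i0_in by simp
        define lam where "lam = (\<lambda>l. S l $ p $ p)"
        define mu' where "mu' = (\<lambda>l. S l $ q $ q)"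
        have Mx: "Max {l \<in> {i0..k}. lam l \<noteq> mu' l} = t"
        proof (rule Max_eqI)
          show "finite {l \<in> {i0..k}. lam l \<noteq> mu' l}" by simp
          show "y \<le> t" if "y \<in> {l \<in> {i0..k}. lam l \<noteq> mu' l}" for y
            using that i0_ge t_max[of y] unfolding T_def lam_def mu'_def dd_def by auto
          show "t \<in> {l \<in> {i0..k}. lam l \<noteq> mu' l}" using tp i0_le_t unfolding lam_def mu'_def dd_def by auto
        qed
        have "alpha_star k i0 lam mu' x = (\<Sum>l=i0..t. (lam l - mu' l) * (\<Prod>nu\<in>{l<..t}. (x i0 - x nu)))"
          unfolding alpha_star_def Let_def Mx ..
        also have "\<dots> = (\<Sum>l=i0..t. dd l * (\<Prod>nu\<in>{l<..t}. (c j - x nu)))"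
          by (simp only: xi0 lam_def mu'_def dd_def)
        also have "\<dots> = (\<Sum>l=i0..t. QI x Ij t (c j) * (dd l / QI x Ij l (c j)))"
        proof (rule sum.cong[OF refl])
          fix l assume "l \<in> {i0..t}"
          then have "QI x Ij t (c j) = QI x Ij l (c j) * (\<Prod>mu\<in>{l<..t}. (c j - x mu))"
            and "QI x Ij l (c j) \<noteq> 0" using Qsplit Qnz tp by auto
          then show "dd l * (\<Prod>nu\<in>{l<..t}. (c j - x nu)) = QI x Ij t (c j) * (dd l / QI x Ij l (c j))"
            by (simp add: field_simps)
        qed
        also have "\<dots> = QI x Ij t (c j) * Sig" unfolding Sig_eq by (simp add: sum_distrib_left)
        finally have aeq: "alpha_star k i0 lam mu' x = QI x Ij t (c j) * Sig" .
        have diagS: "\<forall>l\<in>{i0..k}. is_diag (S l)" using Sdiag by auto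
        have ev: "is_joint_eigval k S i0 (\<lambda>l. S l $ p' $ p')" for p'
        proof -
          have "axis p' 1 \<in> joint_eigsp k S i0 (\<lambda>l. S l $ p' $ p')"
            unfolding joint_eigsp_diag[OF diagS] by (auto simp: axis_def)
          moreover have "axis p' (1::complex) \<noteq> 0" by (simp add: axis_eq_0_iff)
          ultimately show ?thesis unfolding is_joint_eigval_def by blast
        qed
        have ex: "\<exists>l\<in>{i0..k}. lam l \<noteq> mu' l"
          by (rule bexI[of _ t]) (use tp i0_le_t in \<open>auto simp: lam_def mu'_def dd_def\<close>)
        have xD: "x \<in> D_set k S" using genD unfolding x_def .
        have D: "\<forall>i<k. \<forall>lam mu. is_joint_eigval k S i lam \<and> is_joint_eigval k S i mu \<and>
            (\<exists>l\<in>{i..k}. lam l \<noteq> mu l) \<longrightarrow> alpha_star k i lam mu x \<noteq> 0"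
          using xD unfolding D_set_def by (rule CollectD)
        have e1: "is_joint_eigval k S i0 lam" unfolding lam_def by (rule ev)
        have e2: "is_joint_eigval k S i0 mu'" unfolding mu'_def by (rule ev)
        have "alpha_star k i0 lam mu' x \<noteq> 0"
          using D True e1 e2 ex by blast
        then show ?thesis using aeq by simp
      qed
      then show False using Sig0 by simp
    qed
    have L: "(\<forall>l\<in>{ii nu..k}. S l $ p $ p = S l $ q $ q) \<longleftrightarrow> (\<forall>l. ii nu \<le> l \<and> l \<le> k \<longrightarrow> dd l = 0)"
      unfolding dd_def by auto
    have R: "(\<forall>nu'\<in>{nu..kj}. S' nu' $ p $ p = S' nu' $ q $ q) \<longleftrightarrow> (\<forall>m. nu \<le> m \<and> m \<le> kj \<longrightarrow> da m = 0)"
      using da_eq by (metis atLeastAtMost_iff eq_iff_diff_eq_0)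
    show ?thesis unfolding L R using fwd[OF nu] bwd[OF nu] by blast
  qed

  have comm: "S' nu ** N' = N' ** S' nu" if nu: "nu \<le> kj" for nu
  proof (cases "j = 0")
    case False
    then show ?thesis by (simp add: N'_def vec_eq_iff matrix_matrix_mult_def)
  next
    case True
    have "(S' nu ** N) $ p $ q = (N ** S' nu) $ p $ q" for p q
    proof (cases "N $ p $ q = 0")
      case True
      then show ?thesis by (simp add: diag_mult_left[OF Sdiag'[OF nu]] diag_mult_right[OF Sdiag'[OF nu]])
    next
      case False
      have "S l $ p $ p = S l $ q $ q" if l: "l \<le> k" for l
      proof -
        have "(S l ** N) $ p $ q = (N ** S l) $ p $ q" using Scomm l by simp
        then have "S l $ p $ p * N $ p $ q = N $ p $ q * S l $ q $ q"
          using Sdiag l by (simp add: diag_mult_left diag_mult_right)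
        then show ?thesis using False by simp
      qed
      then have "\<forall>nu'\<in>{0..kj}. S' nu' $ p $ p = S' nu' $ q $ q" using Ceq[of 0 p q] by simp
      then have "S' nu $ p $ p = S' nu $ q $ q" using nu by simp
      then show ?thesis by (simp add: diag_mult_left[OF Sdiag'[OF nu]] diag_mult_right[OF Sdiag'[OF nu]])
    qed
    then show ?thesis using True by (simp add: N'_def vec_eq_iff)
  qed
  have nil': "mat_nilpotent N'"
  proof (cases "j = 0")
    case True then show ?thesis using Nnil by (simp add: N'_def)
  next
    case False
    have "((\<lambda>B. (0::'n cmat) ** B) ^^ 1) (mat 1) = 0" by (simp add: vec_eq_iff matrix_matrix_mult_def)
    then have "mat_nilpotent (0::'n cmat)" unfolding mat_nilpotent_def by blast
    then show ?thesis using False by (simp add: N'_def)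
  qed
  have htl': "htl_nf kj S' N'" unfolding htl_nf_def using Sdiag' nil' comm by auto
  have ii_mono: "ii a \<le> ii b" if "a \<le> b" "b \<le> kj" for a b
    using nth_mono_sorted[OF finI that(1)] that cardI unfolding ii_def' by simp
  have ii0: "ii 0 = 0" if "j = 0"
  proof -
    have "0 \<in> set (sorted_list_of_set Ij)" using zI that finI by simp
    then obtain a where a: "a < length (sorted_list_of_set Ij)" "sorted_list_of_set Ij ! a = 0"
      by (auto simp: in_set_conv_nth)
    have "ii 0 \<le> ii a" using ii_mono[of 0 a] a cardI by simp
    then show ?thesis using a unfolding ii_def' by simp
  qed
  have eig_eq: "joint_eigspaces kj S' nu = joint_eigspaces k S (ii nu)" if nu: "nu \<le> kj" for nu
  proof (rule joint_eigspaces_eq)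
    show "\<forall>l\<in>{nu..kj}. is_diag (S' l)" using Sdiag' by auto
    show "\<forall>l\<in>{ii nu..k}. is_diag (S l)" using Sdiag by auto
    show "\<forall>p q. (\<forall>l\<in>{nu..kj}. S' l $ p $ p = S' l $ q $ q) \<longleftrightarrow> (\<forall>l\<in>{ii nu..k}. S l $ p $ p = S l $ q $ q)"
      using Ceq[OF nu] by blast
  qed
  have spec: "has_spectral_type kj S' N' (\<lambda>nu. m (ii nu))
                (\<lambda>nu. phi_comp phi (ii nu) (ii (Suc nu) - ii nu))
                (if j = 0 then sig else (\<lambda>mu. [m (ii 0) ! mu]))"
    if hs: "has_spectral_type k S N m phi sig" for m phi sig
  proof -
    obtain V :: "nat \<Rightarrow> nat \<Rightarrow> (complex^'n) set" where
      V1: "\<forall>i\<le>k. bij_betw (V i) {..<length (m i)} (joint_eigspaces k S i) \<and>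
              (\<forall>j<length (m i). m i ! j = vec.dim (V i j))" and
      V2: "\<forall>i<k. (\<forall>mu<length (m i). phi i mu < length (m (Suc i))) \<and>
             (\<forall>j<length (m (Suc i)).
                V (Suc i) j = vec.span (\<Union>mu\<in>{mu. mu < length (m i) \<and> phi i mu = j}. V i mu))" and
      V3: "\<forall>j<length (m 0). sig j = signature_seq N (V 0 j)"
      using hs unfolding has_spectral_type_def by blast
    have Vin: "V i j' \<in> joint_eigspaces k S i" if "i \<le> k" "j' < length (m i)" for i j'
      using V1 that by (auto dest: bij_betwE)
    have hV: "\<forall>i\<le>k. \<forall>j'<length (m i). vec.subspace (V i j')"
    proof (intro allI impI)
      fix i j' assume "i \<le> k" "j' < length (m i)"
      then obtain lam where "V i j' = joint_eigsp k S i lam"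
        using Vin unfolding joint_eigspaces_def by blast
      then show "vec.subspace (V i j')" by (simp add: joint_eigsp_subspace)
    qed
    have P1: "\<forall>i\<le>kj. bij_betw (V (ii i)) {..<length (m (ii i))} (joint_eigspaces kj S' i) \<and>
              (\<forall>j<length (m (ii i)). m (ii i) ! j = vec.dim (V (ii i) j))"
      using V1 ii_le eig_eq by simp
    have P2: "\<forall>i<kj. (\<forall>mu<length (m (ii i)). phi_comp phi (ii i) (ii (Suc i) - ii i) mu < length (m (ii (Suc i)))) \<and>
             (\<forall>j<length (m (ii (Suc i))).
                V (ii (Suc i)) j = vec.span (\<Union>mu\<in>{mu. mu < length (m (ii i)) \<and> phi_comp phi (ii i) (ii (Suc i) - ii i) mu = j}. V (ii i) mu))"
    proof (intro allI impI)
      fix i assume i: "i < kj"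
      have e: "ii i + (ii (Suc i) - ii i) = ii (Suc i)" using ii_mono[of i "Suc i"] i by simp
      have le: "ii i + (ii (Suc i) - ii i) \<le> k" unfolding e using ii_le i by simp
      show "(\<forall>mu<length (m (ii i)). phi_comp phi (ii i) (ii (Suc i) - ii i) mu < length (m (ii (Suc i)))) \<and>
             (\<forall>j<length (m (ii (Suc i))).
                V (ii (Suc i)) j = vec.span (\<Union>mu\<in>{mu. mu < length (m (ii i)) \<and> phi_comp phi (ii i) (ii (Suc i) - ii i) mu = j}. V (ii i) mu))"
        using comp_lemma[OF hV V2 le] unfolding e .
    qed
    have P3: "\<forall>j'<length (m (ii 0)). (if j = 0 then sig else (\<lambda>mu. [m (ii 0) ! mu])) j' = signature_seq N' (V (ii 0) j')"
    proof (intro allI impI)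
      fix j' assume j': "j' < length (m (ii 0))"
      show "(if j = 0 then sig else (\<lambda>mu. [m (ii 0) ! mu])) j' = signature_seq N' (V (ii 0) j')"
      proof (cases "j = 0")
        case True
        then show ?thesis using V3 j' ii0 by (simp add: N'_def)
      next
        case False
        have i0k: "ii 0 \<le> k" using ii_le by simp
        have "V (ii 0) j' \<in> joint_eigspaces k S (ii 0)" by (rule Vin[OF i0k j'])
        then have ne: "V (ii 0) j' \<noteq> {0}" unfolding joint_eigspaces_def by blast
        have "vec.subspace (V (ii 0) j')" using hV i0k j' by blast
        then have "0 \<in> V (ii 0) j'" by (simp add: vec.subspace_0)
        then obtain w where w: "w \<in> V (ii 0) j'" "w \<noteq> 0" using ne by blast
        have "m (ii 0) ! j' = vec.dim (V (ii 0) j')" using V1 i0k j' by blast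
        then show ?thesis using False signature_zero[OF w] by (simp add: N'_def)
      qed
    qed
    show ?thesis unfolding has_spectral_type_def
      by (rule exI[of _ "\<lambda>nu. V (ii nu)"]) (use P1 P2 P3 in simp)
  qed
  show ?thesis unfolding kj_def[symmetric] ii_def[symmetric]
  proof (intro exI conjI)
    show "S' 0 + N' = A j 0" by (simp add: S'_def)
    show "\<forall>nu\<in>{1..kj}. S' nu = A j nu" by (simp add: S'_def)
    show "htl_nf kj S' N'" by (rule htl')
    show "\<forall>m phi sig. has_spectral_type k S N m phi sig \<longrightarrow>
      has_spectral_type kj S' N' (\<lambda>nu. m (ii nu)) (\<lambda>nu. phi_comp phi (ii nu) (ii (Suc nu) - ii nu))
        (if j = 0 then sig else (\<lambda>mu. [m (ii 0) ! mu]))" using spec by blast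
  qed
qed


end
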